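(* Let $\Gamma$ be a locally finite connected $\delta$-hyperbolic graph with base vertex $x_0$, let $n\ge0$, let $A\in\mathcal{A}_n(\Gamma)$, and let $x\in\Gamma$. Then $x\in A$ if and only if both of the following hold: (1) $x\in C(p)$ for every $p\in N(A,B_n)$; (2) $d_x$ and $d_A$ differ by a constant on $P(A,S_n)$.
   Context: $\Gamma$ is identified with its vertex set with path metric $d$; $d_x(y)=d(x,y)$. $\delta$-hyperbolic means: for every geodesic triangle with sides $[a,b],[a,c],[b,c]$ and every vertex $v\in[a,b]$ there is a vertex $w\in[a,c]\cup[b,c]$ with $d(v,w)\le\delta$. Write $\ell(x)=d(x_0,x)$, $B_n=\{\ell\le n\}$, $S_n=\{\ell=n\}$, and let $C(p)=\{y:\ell(y)=\ell(p)+d(p,y)\}$ be the cone on $p$. For finite $B$, the atom of $x$ is $\{y: d_y-d_x \text{ is constant on } B\}$; $\mathcal{A}(B)$ is the set of atoms, and $\mathcal{A}_n(\Gamma)$ is the set of infinite atoms of $\mathcal{A}(B_n)$. For an atom $A$, $d_A$ means $d_y|_{B_n}$ for any $y\in A$ (well defined up to an additive constant). For finite $B$ and $y\in\Gamma$, $N(y,B)$ is the set of $p\in B$ with $d(p,y)\le d(q,y)$ for all $q\in B$. For $\ell(y)\ge n$, a point $p\in S_n$ is proximal to $y$ if there is a geodesic $p_0,\ldots,p_n$ from $x_0$ to $p$ such that $d(y_i,p_i)\le4\delta+2$ for all $i\le n$ and every geodesic $y_0=x_0,y_1,\ldots,y_{\ell(y)}=y$ from $x_0$ to $y$; $P(y,S_n)$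 is the set of such points. The sets $N(y,B_n)$ and $P(y,S_n)$ are the same for all $y\in A$, and are denoted $N(A,B_n)$ and $P(A,S_n)$. *)

theory Defs
  imports Complex_Main
begin

text \<open>A graph is given by an adjacency relation E on the vertex type 'a
  (the graph is identified with its vertex set, which is UNIV).\<close>

definition walk :: "('a \<Rightarrow> 'a \<Rightarrow> bool) \<Rightarrow> 'a list \<Rightarrow> bool" where
  "walk E g \<longleftrightarrow> g \<noteq> [] \<and> (\<forall>i. Suc i < length g \<longrightarrow> E (g ! i) (g ! Suc i))"

definition walk_from :: "('a \<Rightarrow> 'a \<Rightarrow> bool) \<Rightarrow> 'a \<Rightarrow> 'a \<Rightarrow> 'a list \<Rightarrow> bool" where
  "walk_from E x y g \<longleftrightarrow> walk E g \<and> hd g = x \<and> last g = y"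

definition connected_graph :: "('a \<Rightarrow> 'a \<Rightarrow> bool) \<Rightarrow> bool" where
  "connected_graph E \<longleftrightarrow> (\<forall>x y. \<exists>g. walk_from E x y g)"

definition locally_finite :: "('a \<Rightarrow> 'a \<Rightarrow> bool) \<Rightarrow> bool" where
  "locally_finite E \<longleftrightarrow> (\<forall>x. finite {y. E x y})"

definition dist_g :: "('a \<Rightarrow> 'a \<Rightarrow> bool) \<Rightarrow> 'a \<Rightarrow> 'a \<Rightarrow> nat" where
  "dist_g E x y = (LEAST n. \<exists>g. walk_from E x y g \<and> length g = Suc n)"

text \<open>A geodesic from a to b, as its list of vertices a = g!0, ..., g!(d a b) = b.\<close>
definition geodesic :: "('a \<Rightarrow> 'a \<Rightarrow> bool) \<Rightarrow> 'a \<Rightarrow> 'a \<Rightarrow> 'a list \<Rightarrow> bool" where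
  "geodesic E a b g \<longleftrightarrow> walk_from E a b g \<and> length g = Suc (dist_g E a b)"

definition hyperbolic :: "('a \<Rightarrow> 'a \<Rightarrow> bool) \<Rightarrow> real \<Rightarrow> bool" where
  "hyperbolic E \<delta> \<longleftrightarrow>
     (\<forall>a b c gab gac gbc. geodesic E a b gab \<and> geodesic E a c gac \<and> geodesic E b c gbc \<longrightarrow>
        (\<forall>v \<in> set gab. \<exists>w \<in> set gac \<union> set gbc. real (dist_g E v w) \<le> \<delta>))"

definition lev :: "('a \<Rightarrow> 'a \<Rightarrow> bool) \<Rightarrow> 'a \<Rightarrow> 'a \<Rightarrow> nat" where
  "lev E x0 x = dist_g E x0 x"

definition ball_n :: "('a \<Rightarrow> 'a \<Rightarrow> bool) \<Rightarrow> 'a \<Rightarrow> nat \<Rightarrow> 'a set" where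
  "ball_n E x0 n = {x. lev E x0 x \<le> n}"

definition sphere_n :: "('a \<Rightarrow> 'a \<Rightarrow> bool) \<Rightarrow> 'a \<Rightarrow> nat \<Rightarrow> 'a set" where
  "sphere_n E x0 n = {x. lev E x0 x = n}"

definition cone :: "('a \<Rightarrow> 'a \<Rightarrow> bool) \<Rightarrow> 'a \<Rightarrow> 'a \<Rightarrow> 'a set" where
  "cone E x0 p = {y. lev E x0 y = lev E x0 p + dist_g E p y}"

definition atom :: "('a \<Rightarrow> 'a \<Rightarrow> bool) \<Rightarrow> 'a set \<Rightarrow> 'a \<Rightarrow> 'a set" where
  "atom E B x = {y. \<exists>c::int. \<forall>b\<in>B. int (dist_g E y b) - int (dist_g E x b) = c}"

definition atoms :: "('a \<Rightarrow> 'a \<Rightarrow> bool) \<Rightarrow> 'a set \<Rightarrow> 'a set set" where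
  "atoms E B = {atom E B x | x. True}"

definition inf_atoms :: "('a \<Rightarrow> 'a \<Rightarrow> bool) \<Rightarrow> 'a \<Rightarrow> nat \<Rightarrow> 'a set set" where
  "inf_atoms E x0 n = {A \<in> atoms E (ball_n E x0 n). infinite A}"

definition nearest :: "('a \<Rightarrow> 'a \<Rightarrow> bool) \<Rightarrow> 'a \<Rightarrow> 'a set \<Rightarrow> 'a set" where
  "nearest E y B = {p \<in> B. \<forall>q\<in>B. dist_g E p y \<le> dist_g E q y}"

definition proximal :: "('a \<Rightarrow> 'a \<Rightarrow> bool) \<Rightarrow> real \<Rightarrow> 'a \<Rightarrow> 'a \<Rightarrow> nat \<Rightarrow> 'a set" where
  "proximal E \<delta> x0 y n = {p \<in> sphere_n E x0 n.
     \<exists>pg. geodesic E x0 p pg \<and>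
       (\<forall>yg. geodesic E x0 y yg \<longrightarrow>
          (\<forall>i\<le>n. real (dist_g E (yg ! i) (pg ! i)) \<le> 4 * \<delta> + 2))}"

definition nearest_atom :: "('a \<Rightarrow> 'a \<Rightarrow> bool) \<Rightarrow> 'a set \<Rightarrow> 'a set \<Rightarrow> 'a set" where
  "nearest_atom E A B = nearest E (SOME y. y \<in> A) B"

definition proximal_atom :: "('a \<Rightarrow> 'a \<Rightarrow> bool) \<Rightarrow> real \<Rightarrow> 'a \<Rightarrow> 'a set \<Rightarrow> nat \<Rightarrow> 'a set" where
  "proximal_atom E \<delta> x0 A n = proximal E \<delta> x0 (SOME y. y \<in> A) n"

text \<open>d_A: d_y for a representative y of A (well defined up to an additive constant on B_n).\<close>
definition dist_atom :: "('a \<Rightarrow> 'a \<Rightarrow> bool) \<Rightarrow> 'a set \<Rightarrow> 'a \<Rightarrow> nat" where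
  "dist_atom E A b = dist_g E (SOME y. y \<in> A) b"

end

theory Submission
  imports Defs
begin



lemma walk_Cons: "walk E (a # xs) \<longleftrightarrow> (xs = [] \<or> (E a (hd xs) \<and> walk E xs))"
proof (cases xs)
  case Nil then show ?thesis by (simp add: walk_def)
next
  case (Cons b ys)
  show ?thesis
  proof
    assume w: "walk E (a # xs)"
    have "E a (hd xs)" using w Cons unfolding walk_def by force
    moreover have "walk E xs" unfolding walk_def
    proof (intro conjI allI impI)
      show "xs \<noteq> []" using Cons by simp
      fix i assume "Suc i < length xs"
      then show "E (xs ! i) (xs ! Suc i)" using w unfolding walk_def
        by (metis Suc_less_eq length_Cons nth_Cons_Suc)
    qed
    ultimately show "xs = [] \<or> (E a (hd xs) \<and> walk E xs)" by simp
  next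
    assume r: "xs = [] \<or> (E a (hd xs) \<and> walk E xs)"
    then have e: "E a (hd xs)" and w: "walk E xs" using Cons by auto
    show "walk E (a # xs)" unfolding walk_def
    proof (intro conjI allI impI)
      show "a # xs \<noteq> []" by simp
      fix i assume i: "Suc i < length (a # xs)"
      show "E ((a # xs) ! i) ((a # xs) ! Suc i)"
      proof (cases i)
        case 0 then show ?thesis using e Cons by simp
      next
        case (Suc j) then show ?thesis using w i unfolding walk_def by simp
      qed
    qed
  qed
qed

lemma walk_append: "walk E xs \<Longrightarrow> walk E ys \<Longrightarrow> last xs = hd ys \<Longrightarrow> walk E (xs @ tl ys)"
proof (induction xs)
  case Nil then show ?case by (simp add: walk_def)
next
  case (Cons a xs)
  show ?case
  proof (cases "xs = []")
    case True
    then have "a = hd ys" using Cons by simp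
    then show ?thesis using True Cons.prems(2) by (cases ys) (auto simp: walk_def)
  next
    case False
    then have "E a (hd xs)" "walk E xs" using Cons.prems(1) walk_Cons by metis+
    moreover have "walk E (xs @ tl ys)" using Cons False calculation by simp
    ultimately show ?thesis using False by (simp add: walk_Cons)
  qed
qed

lemma walk_rev:
  assumes sym: "\<And>u v. E u v \<Longrightarrow> E v u" and w: "walk E g"
  shows "walk E (rev g)"
  unfolding walk_def
proof (intro conjI allI impI)
  show "rev g \<noteq> []" using w by (simp add: walk_def)
  fix i assume i: "Suc i < length (rev g)"
  let ?l = "length g"
  have "E (g ! (?l - Suc (Suc i))) (g ! Suc (?l - Suc (Suc i)))"
    using w i unfolding walk_def by simp
  moreover have "Suc (?l - Suc (Suc i)) = ?l - Suc i" using i by simp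
  ultimately have "E (g ! (?l - Suc i)) (g ! (?l - Suc (Suc i)))" using sym by metis
  then show "E (rev g ! i) (rev g ! Suc i)" using i by (simp add: rev_nth)
qed

lemma walk_take: "walk E g \<Longrightarrow> 0 < k \<Longrightarrow> walk E (take k g)"
  unfolding walk_def by auto

lemma walk_drop: "walk E g \<Longrightarrow> k < length g \<Longrightarrow> walk E (drop k g)"
  unfolding walk_def by auto




locale G =
  fixes E :: "'a \<Rightarrow> 'a \<Rightarrow> bool"
  assumes sym: "\<And>u v. E u v \<Longrightarrow> E v u"
    and conn: "connected_graph E"
begin

abbreviation d where "d \<equiv> dist_g E"

lemma dist_le: "walk_from E x y g \<Longrightarrow> d x y \<le> length g - 1"
proof -
  assume w: "walk_from E x y g"
  then have "g \<noteq> []" by (simp add: walk_from_def walk_def)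
  then have "length g = Suc (length g - 1)" by simp
  then have "\<exists>g'. walk_from E x y g' \<and> length g' = Suc (length g - 1)" using w by blast
  then show ?thesis unfolding dist_g_def by (rule Least_le)
qed

lemma geo_ex: "\<exists>g. geodesic E x y g"
proof -
  obtain g where w: "walk_from E x y g" using conn unfolding connected_graph_def by blast
  then have "g \<noteq> []" by (simp add: walk_from_def walk_def)
  then have "length g = Suc (length g - 1)" by simp
  then have "\<exists>n g'. walk_from E x y g' \<and> length g' = Suc n" using w by blast
  then have "\<exists>g'. walk_from E x y g' \<and> length g' = Suc (d x y)"
    unfolding dist_g_def by (rule LeastI_ex)
  then show ?thesis unfolding geodesic_def by blast
qed

lemma dist_sym_le: "d y x \<le> d x y"
proof -
  obtain g where g: "geodesic E x y g" using geo_ex by blast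
  have "walk E (rev g)" using walk_rev[of E g] sym g unfolding geodesic_def walk_from_def by blast
  then have "walk_from E y x (rev g)"
    using g unfolding geodesic_def walk_from_def
    by (auto simp: hd_rev last_rev)
  then show ?thesis using dist_le g unfolding geodesic_def by fastforce
qed

lemma dist_sym: "d x y = d y x"
  using dist_sym_le by (metis le_antisym)

lemma dist_tri: "d x z \<le> d x y + d y z"
proof -
  obtain g1 where g1: "geodesic E x y g1" using geo_ex by blast
  obtain g2 where g2: "geodesic E y z g2" using geo_ex by blast
  have w: "walk E (g1 @ tl g2)" using g1 g2 walk_append
    unfolding geodesic_def walk_from_def by metis
  have ne: "g1 \<noteq> []" "g2 \<noteq> []" using g1 g2 unfolding geodesic_def walk_from_def walk_def by auto
  have "hd (g1 @ tl g2) = x" using g1 ne unfolding geodesic_def walk_from_def by simp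
  moreover have "last (g1 @ tl g2) = z"
  proof (cases "tl g2 = []")
    case True
    then have "g2 = [hd g2]" using ne by (cases g2) auto
    then have "y = z" using g2 unfolding geodesic_def walk_from_def by (metis last_ConsL list.sel(1))
    then show ?thesis using True g1 unfolding geodesic_def walk_from_def by simp
  next
    case False
    then show ?thesis using g2 unfolding geodesic_def walk_from_def by (simp add: last_tl)
  qed
  ultimately have "walk_from E x z (g1 @ tl g2)" using w by (simp add: walk_from_def)
  then have "d x z \<le> length (g1 @ tl g2) - 1" by (rule dist_le)
  also have "\<dots> = d x y + d y z" using g1 g2 unfolding geodesic_def by simp
  finally show ?thesis .
qed

lemma dist_self: "d x x = 0"
proof -
  have "walk_from E x x [x]" by (simp add: walk_from_def walk_def)
  then show ?thesis using dist_le by fastforce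
qed

lemma dist_0: "d x y = 0 \<Longrightarrow> x = y"
proof -
  assume "d x y = 0"
  obtain g where g: "geodesic E x y g" using geo_ex by blast
  then have "length g = 1" using \<open>d x y = 0\<close> by (simp add: geodesic_def)
  then obtain a where "g = [a]" by (cases g) auto
  then show "x = y" using g by (auto simp add: geodesic_def walk_from_def)
qed

lemma dist_edge: "E u v \<Longrightarrow> d u v \<le> 1"
proof -
  assume "E u v"
  then have "walk_from E u v [u, v]" by (simp add: walk_from_def walk_def nth_Cons split: nat.splits)
  then show ?thesis using dist_le by fastforce
qed

lemma walk_seg:
  assumes w: "walk E g" and ij: "i \<le> j" "j < length g"
  shows "d (g ! i) (g ! j) \<le> j - i"
proof -
  let ?s = "take (Suc (j - i)) (drop i g)"
  have "walk E (drop i g)" using w ij walk_drop by force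
  then have ws: "walk E ?s" using walk_take by blast
  have len: "length ?s = Suc (j - i)" using ij by simp
  have "hd ?s = g ! i" using ij by (simp add: hd_drop_conv_nth)
  moreover have "last ?s = g ! j"
  proof -
    have "last ?s = ?s ! (j - i)" using len by (metis diff_Suc_1 last_conv_nth list.size(3) nat.distinct(1))
    also have "\<dots> = g ! j" using ij by simp
    finally show ?thesis .
  qed
  ultimately have "walk_from E (g ! i) (g ! j) ?s" using ws by (simp add: walk_from_def)
  then show ?thesis using dist_le len by fastforce
qed

lemma walk_seg_abs:
  assumes w: "walk E g" and "i < length g" "j < length g"
  shows "int (d (g ! i) (g ! j)) \<le> \<bar>int i - int j\<bar>"
proof (cases "i \<le> j")
  case True then show ?thesis using walk_seg[OF w True] assms by auto
next
  case False then have "j \<le> i" by simp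
  then have "d (g ! j) (g ! i) \<le> i - j" using walk_seg[OF w \<open>j \<le> i\<close>] assms by simp
  then show ?thesis using dist_sym[of "g ! i" "g ! j"] \<open>j \<le> i\<close> by simp
qed

lemma geo_start:
  assumes g: "geodesic E a b g" and i: "i < length g"
  shows "d a (g ! i) = i" and "d (g ! i) b = length g - 1 - i"
proof -
  have w: "walk E g" and h: "hd g = a" and l: "last g = b" and len: "length g = Suc (d a b)"
    using g by (auto simp: geodesic_def walk_from_def)
  have g0: "g ! 0 = a" using h w by (simp add: hd_conv_nth walk_def)
  have gl: "g ! (length g - 1) = b" using l w by (simp add: last_conv_nth walk_def)
  have 1: "d a (g ! i) \<le> i" using walk_seg[OF w, of 0 i] i g0 by simp
  have 2: "d (g ! i) b \<le> length g - 1 - i" using walk_seg[OF w, of i "length g - 1"] i gl by simp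
  have 3: "d a b \<le> d a (g ! i) + d (g ! i) b" by (rule dist_tri)
  show "d a (g ! i) = i" using 1 2 3 len i by linarith
  show "d (g ! i) b = length g - 1 - i" using 1 2 3 len i by linarith
qed

lemma lev_diff: "int (lev E x0 u) \<le> int (lev E x0 v) + int (d u v)"
proof -
  have "d x0 u \<le> d x0 v + d v u" by (rule dist_tri)
  then show ?thesis unfolding lev_def using dist_sym[of u v] by linarith
qed

end



context G begin

definition hypD :: "nat \<Rightarrow> bool" where
  "hypD D \<longleftrightarrow> (\<forall>a b c gab gac gbc. geodesic E a b gab \<and> geodesic E a c gac \<and> geodesic E b c gbc \<longrightarrow>
        (\<forall>v \<in> set gab. \<exists>w \<in> set gac \<union> set gbc. d v w \<le> D))"

lemma hyp_D:
  assumes "hyperbolic E \<delta>"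
  shows "hypD (nat \<lfloor>\<delta>\<rfloor>)" and "real (nat \<lfloor>\<delta>\<rfloor>) \<le> \<delta>"
proof -
  obtain x :: 'a where True by blast
  have gx: "geodesic E x x [x]" by (simp add: geodesic_def walk_from_def walk_def dist_self)
  then have "\<exists>w \<in> set [x] \<union> set [x]. real (d x w) \<le> \<delta>" using assms unfolding hyperbolic_def by force
  then have d0: "0 \<le> \<delta>" using dist_self by auto
  show "real (nat \<lfloor>\<delta>\<rfloor>) \<le> \<delta>" using d0 by linarith
  show "hypD (nat \<lfloor>\<delta>\<rfloor>)" unfolding hypD_def
  proof (intro allI impI ballI)
    fix a b c gab gac gbc v
    assume t: "geodesic E a b gab \<and> geodesic E a c gac \<and> geodesic E b c gbc" and v: "v \<in> set gab"
    then obtain w where w: "w \<in> set gac \<union> set gbc" "real (d v w) \<le> \<delta>"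
      using assms unfolding hyperbolic_def by blast
    then have "d v w \<le> nat \<lfloor>\<delta>\<rfloor>" by linarith
    then show "\<exists>w\<in>set gac \<union> set gbc. d v w \<le> nat \<lfloor>\<delta>\<rfloor>" using w by blast
  qed
qed

lemma lev_geo: "geodesic E x0 z g \<Longrightarrow> i < length g \<Longrightarrow> lev E x0 (g ! i) = i"
  unfolding lev_def using geo_start by blast

lemma geo_len: "geodesic E x0 z g \<Longrightarrow> length g = Suc (lev E x0 z)"
  unfolding geodesic_def lev_def by simp

lemma geo_walk: "geodesic E a b g \<Longrightarrow> walk E g"
  unfolding geodesic_def walk_from_def by simp

lemma thin_core:
  assumes hD: "hypD D"
    and g: "geodesic E x0 z g" and h: "geodesic E x0 q h" and gm: "geodesic E z q gm"
    and lq: "lev E x0 q = n" and lw: "\<forall>w \<in> set gm. n \<le> lev E x0 w"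
    and i: "i \<le> n"
  shows "d (g ! i) (h ! i) \<le> 4 * D + 2"
proof -
  have lz: "n \<le> lev E x0 z" using lw gm unfolding geodesic_def walk_from_def walk_def
    by (metis hd_in_set)
  have lg: "length g = Suc (lev E x0 z)" using geo_len[OF g] .
  have lh: "length h = Suc n" using geo_len[OF h] lq by simp
  have wg: "walk E g" and wh: "walk E h" using g h geo_walk by auto
  have small: "d (g ! j) (h ! j) \<le> 2 * D" if j: "j \<le> n" "j + D < n" for j
  proof -
    have "g ! j \<in> set g" using j lz lg by auto
    then obtain w where w: "w \<in> set h \<union> set gm" "d (g ! j) w \<le> D"
      using hD g h gm unfolding hypD_def by blast
    have lgj: "lev E x0 (g ! j) = j" using lev_geo[OF g] j lz lg by simp
    have "int (lev E x0 w) \<le> int (lev E x0 (g ! j)) + int (d (g ! j) w)"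
      using lev_diff dist_sym by (metis)
    then have lwl: "lev E x0 w \<le> j + D" using lgj w by linarith
    have "w \<notin> set gm" using lw lwl j by fastforce
    then have "w \<in> set h" using w by blast
    then obtain k where k: "k < length h" "h ! k = w" by (metis in_set_conv_nth)
    have lk: "lev E x0 w = k" using lev_geo[OF h k(1)] k by simp
    have "int (lev E x0 (g ! j)) \<le> int (lev E x0 w) + int (d (g ! j) w)"
      using lev_diff by blast
    moreover have "int (lev E x0 w) \<le> int (lev E x0 (g ! j)) + int (d (g ! j) w)"
      using lev_diff dist_sym by metis
    ultimately have kj: "\<bar>int k - int j\<bar> \<le> int D" using lgj lk w by linarith
    have "int (d (h ! k) (h ! j)) \<le> \<bar>int k - int j\<bar>" using walk_seg_abs[OF wh, of k j] k j lh by simp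
    moreover have "d (g ! j) (h ! j) \<le> d (g ! j) (h ! k) + d (h ! k) (h ! j)" by (rule dist_tri)
    ultimately show ?thesis using kj w k by (simp; linarith)
  qed
  show ?thesis
  proof (cases "i + D < n")
    case True then show ?thesis using small i by fastforce
  next
    case False
    show ?thesis
    proof (cases "n \<le> D")
      case True
      have g0: "g ! 0 = x0" and h0: "h ! 0 = x0" using g h unfolding geodesic_def walk_from_def walk_def
        by (auto simp: hd_conv_nth)
      have "d (g ! 0) (g ! i) \<le> i" using walk_seg[OF wg, of 0 i] i lz lg by simp
      moreover have "d (h ! 0) (h ! i) \<le> i" using walk_seg[OF wh, of 0 i] i lh by simp
      moreover have "d (g ! i) (h ! i) \<le> d (g ! i) x0 + d x0 (h ! i)" by (rule dist_tri)
      ultimately show ?thesis using g0 h0 dist_sym[of "g ! i" x0] True i by (simp; linarith)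
    next
      case False2: False
      define j where "j = n - D - 1"
      have j: "j \<le> n" "j + D < n" "j \<le> i" "i - j \<le> D + 1" using False False2 i unfolding j_def by auto
      have s: "d (g ! j) (h ! j) \<le> 2 * D" using small j by blast
      have "int (d (g ! i) (g ! j)) \<le> \<bar>int i - int j\<bar>" using walk_seg_abs[OF wg, of i j] i j lz lg by simp
      moreover have "int (d (h ! j) (h ! i)) \<le> \<bar>int j - int i\<bar>" using walk_seg_abs[OF wh, of j i] i j lh by simp
      moreover have "d (g ! i) (h ! i) \<le> d (g ! i) (g ! j) + d (g ! j) (h ! i)" by (rule dist_tri)
      moreover have "d (g ! j) (h ! i) \<le> d (g ! j) (h ! j) + d (h ! j) (h ! i)" by (rule dist_tri)
      ultimately show ?thesis using s j by (simp; linarith)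
    qed
  qed
qed

end



context G begin

lemma key:
  assumes hD: "hypD D" and Dd: "real D \<le> \<delta>"
    and lz: "n \<le> lev E x0 z" and lb: "lev E x0 b \<le> n"
  shows "\<exists>q \<in> proximal E \<delta> x0 z n. d z b = d z q + d q b"
proof -
  obtain \<gamma> where ga: "geodesic E z b \<gamma>" using geo_ex by blast
  have wg: "walk E \<gamma>" using ga geo_walk by blast
  have ne: "\<gamma> \<noteq> []" using wg walk_def by blast
  have g0: "\<gamma> ! 0 = z" using ga ne unfolding geodesic_def walk_from_def by (simp add: hd_conv_nth)
  have gl: "\<gamma> ! (length \<gamma> - 1) = b" using ga ne unfolding geodesic_def walk_from_def by (metis last_conv_nth)
  define P where "P = (\<lambda>k. k < length \<gamma> \<and> lev E x0 (\<gamma> ! k) \<le> n)"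
  have Pl: "P (length \<gamma> - 1)" using gl lb ne unfolding P_def by simp
  define k where "k = (LEAST k. P k)"
  have Pk: "P k" unfolding k_def using Pl by (rule LeastI)
  have nP: "\<And>j. j < k \<Longrightarrow> \<not> P j" unfolding k_def using not_less_Least by blast
  have kl: "k < length \<gamma>" using Pk P_def by simp
  have gt: "\<And>j. j < k \<Longrightarrow> n < lev E x0 (\<gamma> ! j)" using nP kl unfolding P_def by force
  have lk: "lev E x0 (\<gamma> ! k) = n"
  proof (cases k)
    case 0 then show ?thesis using Pk g0 lz unfolding P_def by simp
  next
    case (Suc j)
    have "d (\<gamma> ! j) (\<gamma> ! k) \<le> 1" using walk_seg[OF wg, of j k] Suc kl by simp
    moreover have "int (lev E x0 (\<gamma> ! j)) \<le> int (lev E x0 (\<gamma> ! k)) + int (d (\<gamma> ! j) (\<gamma> ! k))"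
      using lev_diff dist_sym by metis
    moreover have "n < lev E x0 (\<gamma> ! j)" using gt Suc by simp
    ultimately show ?thesis using Pk unfolding P_def by linarith
  qed
  define q where "q = \<gamma> ! k"
  define gm where "gm = take (Suc k) \<gamma>"
  have dzq: "d z q = k" using geo_start(1)[OF ga kl] q_def by simp
  have dqb: "d q b = length \<gamma> - 1 - k" using geo_start(2)[OF ga kl] q_def by simp
  have dzb: "d z b = length \<gamma> - 1" using ga unfolding geodesic_def by simp
  have gmg: "geodesic E z q gm"
    unfolding geodesic_def walk_from_def gm_def
  proof (intro conjI)
    show "walk E (take (Suc k) \<gamma>)" using walk_take[OF wg, of "Suc k"] by simp
    show "hd (take (Suc k) \<gamma>) = z" using ne g0 by (simp add: hd_conv_nth)
    show "last (take (Suc k) \<gamma>) = q" using kl q_def by (simp add: take_Suc_conv_app_nth)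
    show "length (take (Suc k) \<gamma>) = Suc (d z q)" using kl dzq by simp
  qed
  have lw: "\<forall>w \<in> set gm. n \<le> lev E x0 w"
  proof
    fix w assume "w \<in> set gm"
    then obtain j where j: "j < length gm" "gm ! j = w" by (metis in_set_conv_nth)
    then have "j \<le> k" "w = \<gamma> ! j" unfolding gm_def by auto
    then show "n \<le> lev E x0 w" using gt[of j] lk by (cases "j = k") auto
  qed
  obtain h where h: "geodesic E x0 q h" using geo_ex by blast
  have "q \<in> proximal E \<delta> x0 z n"
    unfolding proximal_def sphere_n_def
  proof (intro CollectI conjI exI allI impI)
    show "lev E x0 q = n" using lk q_def by simp
    show "geodesic E x0 q h" by (rule h)
    fix yg i assume yg: "geodesic E x0 z yg" and i: "i \<le> n"
    have "d (yg ! i) (h ! i) \<le> 4 * D + 2"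
      using thin_core[OF hD yg h gmg _ lw i] lk q_def by simp
    then have "real (d (yg ! i) (h ! i)) \<le> 4 * real D + 2" by linarith
    then show "real (d (yg ! i) (h ! i)) \<le> 4 * \<delta> + 2" using Dd by linarith
  qed
  moreover have "d z b = d z q + d q b" using dzq dqb dzb kl by simp
  ultimately show ?thesis by blast
qed

end


context G begin
lemma geo_n_nearest:
  assumes g: "geodesic E x0 y g" and n: "n \<le> lev E x0 y"
  shows "g ! n \<in> nearest E y (ball_n E x0 n)" and "d (g ! n) y = lev E x0 y - n"
proof -
  have nl: "n < length g" using geo_len[OF g] n by simp
  have l: "lev E x0 (g ! n) = n" using lev_geo[OF g nl] .
  show dy: "d (g ! n) y = lev E x0 y - n" using geo_start(2)[OF g nl] geo_len[OF g] by simp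
  show "g ! n \<in> nearest E y (ball_n E x0 n)"
    unfolding nearest_def ball_n_def
  proof (intro CollectI conjI ballI)
    show "lev E x0 (g ! n) \<le> n" using l by simp
    fix q assume "q \<in> {x. lev E x0 x \<le> n}"
    then have "lev E x0 q \<le> n" by simp
    moreover have "lev E x0 y \<le> lev E x0 q + d q y" unfolding lev_def by (rule dist_tri)
    ultimately show "d (g ! n) y \<le> d q y" using dy by linarith
  qed
qed

lemma nearest_cone:
  assumes n: "n \<le> lev E x0 y" and p: "p \<in> nearest E y (ball_n E x0 n)"
  shows "lev E x0 p = n" and "d p y = lev E x0 y - n" and "y \<in> cone E x0 p"
proof -
  obtain g where g: "geodesic E x0 y g" using geo_ex by blast
  have "g ! n \<in> ball_n E x0 n" using geo_n_nearest(1)[OF g n] unfolding nearest_def by simp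
  then have "d p y \<le> d (g ! n) y" using p unfolding nearest_def by simp
  then have 1: "d p y \<le> lev E x0 y - n" using geo_n_nearest(2)[OF g n] by simp
  have 2: "lev E x0 p \<le> n" using p unfolding nearest_def ball_n_def by simp
  have 3: "lev E x0 y \<le> lev E x0 p + d p y" unfolding lev_def by (rule dist_tri)
  show "lev E x0 p = n" using 1 2 3 n by linarith
  show "d p y = lev E x0 y - n" using 1 2 3 n by linarith
  show "y \<in> cone E x0 p" unfolding cone_def using 1 2 3 n by simp
qed

lemma prox_subset:
  assumes n: "n \<le> lev E x0 y"
    and c: "\<forall>p \<in> nearest E y (ball_n E x0 n). x \<in> cone E x0 p"
  shows "proximal E \<delta> x0 x n \<subseteq> proximal E \<delta> x0 y n"
proof
  fix q assume "q \<in> proximal E \<delta> x0 x n"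
  then obtain h where q: "q \<in> sphere_n E x0 n" and h: "geodesic E x0 q h"
    and hx: "\<forall>yg. geodesic E x0 x yg \<longrightarrow> (\<forall>i\<le>n. real (d (yg ! i) (h ! i)) \<le> 4 * \<delta> + 2)"
    unfolding proximal_def by blast
  show "q \<in> proximal E \<delta> x0 y n"
    unfolding proximal_def
  proof (intro CollectI conjI exI allI impI)
    show "q \<in> sphere_n E x0 n" by (rule q)
    show "geodesic E x0 q h" by (rule h)
    fix g i assume g: "geodesic E x0 y g" and i: "i \<le> n"
    define p where "p = g ! n"
    have pN: "p \<in> nearest E y (ball_n E x0 n)" using geo_n_nearest(1)[OF g n] p_def by simp
    have lp: "lev E x0 p = n" using nearest_cone(1)[OF n pN] .
    have xc: "lev E x0 x = n + d p x" using c pN lp unfolding cone_def by auto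
    obtain g2 where g2: "geodesic E p x g2" using geo_ex by blast
    have nl: "n < length g" using geo_len[OF g] n by simp
    define g' where "g' = take (Suc n) g @ tl g2"
    have wt: "walk E (take (Suc n) g)" using walk_take geo_walk[OF g] by blast
    have ltk: "last (take (Suc n) g) = p" using nl p_def by (simp add: take_Suc_conv_app_nth)
    have g2ne: "g2 \<noteq> []" using geo_walk[OF g2] walk_def by blast
    have hd2: "hd g2 = p" using g2 unfolding geodesic_def walk_from_def by simp
    have w': "walk E g'" unfolding g'_def using walk_append[OF wt geo_walk[OF g2]] ltk hd2 by simp
    have "hd g = x0" "g \<noteq> []" using g unfolding geodesic_def walk_from_def walk_def by auto
    then have hd': "hd g' = x0" unfolding g'_def by (cases g) auto
    have last': "last g' = x"
    proof (cases "tl g2 = []")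
      case True
      then have "g2 = [p]" using g2ne hd2 by (cases g2) auto
      then have "p = x" using g2 unfolding geodesic_def walk_from_def by simp
      then show ?thesis using True ltk unfolding g'_def by simp
    next
      case False
      then show ?thesis using g2 unfolding g'_def geodesic_def walk_from_def by (simp add: last_tl)
    qed
    have len': "length g' = Suc (d x0 x)"
      unfolding g'_def using nl g2 xc g2ne unfolding geodesic_def lev_def by simp
    have g'g: "geodesic E x0 x g'" unfolding geodesic_def walk_from_def using w' hd' last' len' by simp
    have "g' ! i = g ! i" unfolding g'_def using i nl by (simp add: nth_append)
    moreover have "real (d (g' ! i) (h ! i)) \<le> 4 * \<delta> + 2" using hx g'g i by blast
    ultimately show "real (d (g ! i) (h ! i)) \<le> 4 * \<delta> + 2" by simp
  qed
qed

end


context G begin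
lemma atom_small:
  assumes A: "A = atom E (ball_n E x0 n) z0" and inf: "infinite A" and y: "y \<in> A"
  shows "n \<le> lev E x0 y"
proof (rule ccontr)
  assume "\<not> n \<le> lev E x0 y"
  then have ly: "lev E x0 y < n" by simp
  have "A \<noteq> {y}" using inf by auto
  then obtain w where w: "w \<in> A" "w \<noteq> y" using y by blast
  have "\<exists>c1. \<forall>b\<in>ball_n E x0 n. int (d y b) - int (d z0 b) = c1" using y unfolding A atom_def by simp
  then obtain c1 where c1: "\<forall>b\<in>ball_n E x0 n. int (d y b) - int (d z0 b) = c1" by blast
  have "\<exists>c2. \<forall>b\<in>ball_n E x0 n. int (d w b) - int (d z0 b) = c2" using w unfolding A atom_def by simp
  then obtain c2 where c2: "\<forall>b\<in>ball_n E x0 n. int (d w b) - int (d z0 b) = c2" by blast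
  have yb: "y \<in> ball_n E x0 n" using ly unfolding ball_n_def by simp
  obtain \<gamma> where ga: "geodesic E y w \<gamma>" using geo_ex by blast
  have dyw: "d y w > 0" using w(2) dist_0[of y w] by (cases "d y w") auto
  have len: "1 < length \<gamma>" using ga dyw unfolding geodesic_def by simp
  define u where "u = \<gamma> ! 1"
  have dyu: "d y u = 1" using geo_start(1)[OF ga, of 1] len u_def by simp
  have duw: "d u w = d y w - 1" using geo_start(2)[OF ga, of 1] len u_def ga unfolding geodesic_def by simp
  have "lev E x0 u \<le> lev E x0 y + d y u" unfolding lev_def by (rule dist_tri)
  then have ub: "u \<in> ball_n E x0 n" using ly dyu unfolding ball_n_def by simp
  have "int (d y y) - int (d z0 y) = c1" "int (d w y) - int (d z0 y) = c2" using c1 c2 yb by auto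
  then have e1: "int (d w y) - int (d y y) = c2 - c1" by linarith
  have "int (d y u) - int (d z0 u) = c1" "int (d w u) - int (d z0 u) = c2" using c1 c2 ub by auto
  then have e2: "int (d w u) - int (d y u) = c2 - c1" by linarith
  have "d y y = 0" by (rule dist_self)
  moreover have "d w y = d y w" "d w u = d u w" using dist_sym[of w y] dist_sym[of w u] by auto
  ultimately show False using e1 e2 dyu duw dyw by linarith
qed

end


context G begin
lemma atom_eq:
  assumes "y \<in> atom E B z0" shows "x \<in> atom E B z0 \<longleftrightarrow> (\<exists>c::int. \<forall>b\<in>B. int (d x b) - int (d y b) = c)"
proof -
  have "\<exists>c1. \<forall>b\<in>B. int (d y b) - int (d z0 b) = c1" using assms unfolding atom_def by simp
  then obtain c1 where c1: "\<forall>b\<in>B. int (d y b) - int (d z0 b) = c1" by blast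
  show ?thesis
  proof
    assume "x \<in> atom E B z0"
    then have "\<exists>c2. \<forall>b\<in>B. int (d x b) - int (d z0 b) = c2" unfolding atom_def by simp
    then obtain c2 where c2: "\<forall>b\<in>B. int (d x b) - int (d z0 b) = c2" by blast
    have "\<forall>b\<in>B. int (d x b) - int (d y b) = c2 - c1"
    proof
      fix b assume b: "b \<in> B"
      have "int (d y b) - int (d z0 b) = c1" "int (d x b) - int (d z0 b) = c2" using c1 c2 b by auto
      then show "int (d x b) - int (d y b) = c2 - c1" by linarith
    qed
    then show "\<exists>c::int. \<forall>b\<in>B. int (d x b) - int (d y b) = c" by blast
  next
    assume "\<exists>c::int. \<forall>b\<in>B. int (d x b) - int (d y b) = c"
    then obtain c2 where c2: "\<forall>b\<in>B. int (d x b) - int (d y b) = c2" by blast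
    have "\<forall>b\<in>B. int (d x b) - int (d z0 b) = c2 + c1"
    proof
      fix b assume b: "b \<in> B"
      have "int (d y b) - int (d z0 b) = c1" "int (d x b) - int (d y b) = c2" using c1 c2 b by auto
      then show "int (d x b) - int (d z0 b) = c2 + c1" by linarith
    qed
    then show "x \<in> atom E B z0" unfolding atom_def by blast
  qed
qed


end

theorem mainTheorem17:
  fixes E :: "'a \<Rightarrow> 'a \<Rightarrow> bool" and \<delta> :: real and x0 :: 'a and n :: nat
    and A :: "'a set" and x :: 'a
  assumes sym: "\<And>u v. E u v \<Longrightarrow> E v u"
    and lf: "locally_finite E"
    and conn: "connected_graph E"
    and hyp: "hyperbolic E \<delta>"
    and A: "A \<in> inf_atoms E x0 n"
  shows "x \<in> A \<longleftrightarrow>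
    ((\<forall>p \<in> nearest_atom E A (ball_n E x0 n). x \<in> cone E x0 p) \<and>
     (\<exists>c::int. \<forall>p \<in> proximal_atom E \<delta> x0 A n.
        int (dist_g E x p) - int (dist_atom E A p) = c))"
proof -
  interpret G E using sym conn by unfold_locales
  define B where "B = ball_n E x0 n"
  obtain z0 where Aeq: "A = atom E B z0" and inf: "infinite A"
    using A unfolding inf_atoms_def atoms_def B_def by blast
  have "A \<noteq> {}" using inf by auto
  then have "\<exists>y. y \<in> A" by blast
  define y where "y = (SOME y. y \<in> A)"
  have yA: "y \<in> A" unfolding y_def using \<open>\<exists>y. y \<in> A\<close> by (rule someI_ex)
  have ly: "n \<le> lev E x0 y" using atom_small[OF Aeq[unfolded B_def] inf yA] .
  have NA: "nearest_atom E A B = nearest E y B" unfolding nearest_atom_def y_def ..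
  have PA: "proximal_atom E \<delta> x0 A n = proximal E \<delta> x0 y n" unfolding proximal_atom_def y_def ..
  have DA: "\<And>p. dist_atom E A p = d y p" unfolding dist_atom_def y_def by simp
  have hD: "hypD (nat \<lfloor>\<delta>\<rfloor>)" and Dd: "real (nat \<lfloor>\<delta>\<rfloor>) \<le> \<delta>" using hyp_D[OF hyp] by auto
  have yatom: "y \<in> atom E B z0" using yA Aeq by simp
  have x0B: "x0 \<in> B" unfolding B_def ball_n_def lev_def using dist_self by simp
  have PS: "proximal E \<delta> x0 y n \<subseteq> B" unfolding proximal_def B_def ball_n_def sphere_n_def by auto
  show ?thesis
  proof
    assume "x \<in> A"
    then obtain c where c: "\<forall>b\<in>B. int (d x b) - int (d y b) = c"
      using atom_eq[OF yatom] Aeq by blast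
    have 1: "\<forall>p \<in> nearest_atom E A B. x \<in> cone E x0 p"
    proof
      fix p assume "p \<in> nearest_atom E A B"
      then have p: "p \<in> nearest E y B" using NA by simp
      have lp: "lev E x0 p = n" and dpy: "d p y = lev E x0 y - n"
        using nearest_cone[OF ly p[unfolded B_def]] by auto
      have pB: "p \<in> B" using p unfolding nearest_def by simp
      have "int (d x x0) - int (d y x0) = c" "int (d x p) - int (d y p) = c" using c x0B pB by auto
      moreover have "d x x0 = lev E x0 x" "d y x0 = lev E x0 y" "d y p = d p y" "d x p = d p x"
        unfolding lev_def using dist_sym[of x x0] dist_sym[of y x0] dist_sym[of y p] dist_sym[of x p] by auto
      ultimately have "lev E x0 x = lev E x0 p + d p x" using lp dpy ly by linarith
      then show "x \<in> cone E x0 p" unfolding cone_def by simp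
    qed
    have 2: "\<forall>p \<in> proximal_atom E \<delta> x0 A n. int (d x p) - int (dist_atom E A p) = c"
      using c PS PA DA by auto
    show "(\<forall>p \<in> nearest_atom E A (ball_n E x0 n). x \<in> cone E x0 p) \<and>
     (\<exists>c::int. \<forall>p \<in> proximal_atom E \<delta> x0 A n. int (dist_g E x p) - int (dist_atom E A p) = c)"
      using 1 2 B_def by blast
  next
    assume asm: "(\<forall>p \<in> nearest_atom E A (ball_n E x0 n). x \<in> cone E x0 p) \<and>
     (\<exists>c::int. \<forall>p \<in> proximal_atom E \<delta> x0 A n. int (dist_g E x p) - int (dist_atom E A p) = c)"
    then have cone: "\<forall>p \<in> nearest E y (ball_n E x0 n). x \<in> cone E x0 p" using NA B_def by simp
    obtain c where c: "\<forall>p \<in> proximal E \<delta> x0 y n. int (d x p) - int (d y p) = c"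
      using asm PA DA by auto
    obtain g where g: "geodesic E x0 y g" using geo_ex by blast
    have p0: "g ! n \<in> nearest E y (ball_n E x0 n)" using geo_n_nearest(1)[OF g ly] .
    have "lev E x0 (g ! n) = n" using nearest_cone(1)[OF ly p0] .
    then have lx: "n \<le> lev E x0 x" using cone p0 unfolding cone_def by auto
    have sub: "proximal E \<delta> x0 x n \<subseteq> proximal E \<delta> x0 y n" using prox_subset[OF ly cone] .
    have "\<forall>b\<in>B. int (d x b) - int (d y b) = c"
    proof
      fix b assume "b \<in> B"
      then have lb: "lev E x0 b \<le> n" unfolding B_def ball_n_def by simp
      obtain q where q: "q \<in> proximal E \<delta> x0 x n" "d x b = d x q + d q b"
        using key[OF hD Dd lx lb] by blast
      have cq: "int (d x q) - int (d y q) = c" using c q(1) sub by blast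
      have "d y b \<le> d y q + d q b" by (rule dist_tri)
      then have i1: "int (d x b) - int (d y b) \<ge> c" using q(2) cq by linarith
      obtain q' where q': "q' \<in> proximal E \<delta> x0 y n" "d y b = d y q' + d q' b"
        using key[OF hD Dd ly lb] by blast
      have cq': "int (d x q') - int (d y q') = c" using c q'(1) by blast
      have "d x b \<le> d x q' + d q' b" by (rule dist_tri)
      then have i2: "int (d x b) - int (d y b) \<le> c" using q'(2) cq' by linarith
      show "int (d x b) - int (d y b) = c" using i1 i2 by linarith
    qed
    then have "x \<in> atom E B z0" using atom_eq[OF yatom] by blast
    then show "x \<in> A" using Aeq by simp
  qed
qed



end
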